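(* For integers $K\ge 3$ and $1\le\ell\le K$, let $M(K,\ell)$ be the number of primitive cyclic compositions of $K$ into $\ell$ positive parts, and define $R(K)=2^{-K}\sum_{K/\log_2 3<\ell\le K} M(K,\ell)\bigl(\log_2 3-K/\ell\bigr)$. Then for each $K\ge 3$, $$R(K)\le(\log_2 3-1)\,\Pr\!\Bigl[\mathrm{Bin}(K-1,\tfrac12)\ge\lceil K/\log_2 3\rceil-1\Bigr].$$
   Context: A primitive cyclic composition of $K$ into $\ell$ parts is a rotation class of compositions $(k_1,\ldots,k_\ell)$ of $K$ into positive integers that is not fixed by any nontrivial cyclic rotation. $\mathrm{Bin}(K-1,1/2)$ is a binomial random variable. *)

theory Defs
  imports "HOL-Probability.Probability"
begin

definition compositions :: "nat \<Rightarrow> nat \<Rightarrow> nat list set" where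
  "compositions K l = {xs. length xs = l \<and> (\<forall>x\<in>set xs. 0 < x) \<and> sum_list xs = K}"

text \<open>Rotation class (cyclic composition) of a composition.\<close>
definition rot_class :: "nat list \<Rightarrow> nat list set" where
  "rot_class xs = {rotate i xs | i. True}"

definition primitive_comp :: "nat list \<Rightarrow> bool" where
  "primitive_comp xs \<longleftrightarrow> (\<forall>i. 0 < i \<and> i < length xs \<longrightarrow> rotate i xs \<noteq> xs)"

definition M :: "nat \<Rightarrow> nat \<Rightarrow> nat" where
  "M K l = card (rot_class ` {xs \<in> compositions K l. primitive_comp xs})"

definition R :: "nat \<Rightarrow> real" where
  "R K = 2 powr (- real K) *
     (\<Sum>l\<in>{l \<in> {1..K}. real K / log 2 3 < real l}.
        real (M K l) * (log 2 3 - real K / real l))"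

end

theory Submission
  imports Defs
begin

lemma sum_list_minus1:
  "(\<forall>x\<in>set xs. 0 < (x::nat)) \<Longrightarrow> sum_list (map (\<lambda>x. x - 1) xs) = sum_list xs - length xs"
proof (induction xs)
  case Nil then show ?case by simp
next
  case (Cons a xs)
  have "length xs \<le> sum_list xs"
    using Cons.prems by (induction xs) (auto simp: Suc_le_eq)
  then show ?case using Cons by auto
qed

lemma comp_finite: "finite (compositions K l)"
proof -
  have "compositions K l \<subseteq> {xs. set xs \<subseteq> {0..K} \<and> length xs = l}"
    unfolding compositions_def using member_le_sum_list by fastforce
  then show ?thesis using finite_subset finite_lists_length_eq by blast
qed

lemma comp_card:
  assumes "1 \<le> l" "l \<le> K"
  shows "card (compositions K l) \<le> (K - 1) choose (l - 1)"
proof -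
  have inj: "inj_on (map (\<lambda>x. x - 1)) (compositions K l)"
  proof (rule inj_onI)
    fix xs ys assume xs: "xs \<in> compositions K l" and ys: "ys \<in> compositions K l"
      and eq: "map (\<lambda>x. x - 1) xs = map (\<lambda>x. x - 1) ys"
    have "length xs = length ys" using xs ys by (simp add: compositions_def)
    moreover have "\<forall>i<length xs. xs ! i = ys ! i"
    proof (intro allI impI)
      fix i assume i: "i < length xs"
      have "xs ! i > 0" "ys ! i > 0" using xs ys i nth_mem \<open>length xs = length ys\<close>
        by (fastforce simp: compositions_def)+
      moreover have "xs ! i - 1 = ys ! i - 1"
        using eq i \<open>length xs = length ys\<close> by (metis nth_map)
      ultimately show "xs ! i = ys ! i" by linarith
    qed
    ultimately show "xs = ys" by (simp add: list_eq_iff_nth_eq)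
  qed
  have sub: "map (\<lambda>x. x - 1) ` compositions K l \<subseteq> {xs::nat list. size xs = l \<and> sum_list xs = K - l}"
    using sum_list_minus1 by (auto simp: compositions_def)
  have "card (compositions K l) = card (map (\<lambda>x. x - 1) ` compositions K l)"
    using card_image[OF inj] by simp
  also have "\<dots> \<le> card {xs::nat list. size xs = l \<and> sum_list xs = K - l}"
  proof (rule card_mono[OF _ sub])
    have "{xs::nat list. size xs = l \<and> sum_list xs = K - l} \<subseteq> {xs. set xs \<subseteq> {0..K} \<and> length xs = l}"
      using member_le_sum_list by fastforce
    then show "finite {xs::nat list. size xs = l \<and> sum_list xs = K - l}"
      using finite_subset finite_lists_length_eq by blast
  qed
  also have "\<dots> = (K - l + l - 1) choose (K - l)" by (rule card_length_sum_list)
  also have "\<dots> = (K - 1) choose (l - 1)"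
    using assms binomial_symmetric[of "l - 1" "K - 1"] by simp
  finally show ?thesis .
qed

lemma M_le: assumes "1 \<le> l" "l \<le> K" shows "M K l \<le> (K - 1) choose (l - 1)"
proof -
  have "M K l \<le> card {xs \<in> compositions K l. primitive_comp xs}"
    unfolding M_def by (rule card_image_le) (simp add: comp_finite)
  also have "\<dots> \<le> card (compositions K l)"
    by (rule card_mono[OF comp_finite]) auto
  finally show ?thesis using comp_card[OF assms] by linarith
qed

theorem mainTheorem10:
  fixes K :: nat
  assumes "K \<ge> 3"
  shows "R K \<le> (log 2 3 - 1) *
           measure_pmf.prob (binomial_pmf (K - 1) (1/2))
             {k. real_of_int (\<lceil>real K / log 2 3\<rceil> - 1) \<le> real k}"
proof -
  define c where "c = log 2 (3::real)"
  define S where "S = {l \<in> {1..K}. real K / c < real l}"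
  define B where "B = {k. real_of_int (\<lceil>real K / log 2 3\<rceil> - 1) \<le> real k}"
  have c1: "c \<ge> 1" unfolding c_def by simp
  have prob: "measure_pmf.prob (binomial_pmf (K - 1) (1/2)) B
      = (\<Sum>k\<in>B \<inter> {..K-1}. real ((K - 1) choose k) * (1/2)^(K-1))"
  proof -
    have "measure_pmf.prob (binomial_pmf (K - 1) (1/2)) B
        = measure_pmf.prob (binomial_pmf (K - 1) (1/2)) (B \<inter> {..K-1})"
      using measure_Int_set_pmf[of "binomial_pmf (K - 1) (1/2)" B] by simp
    also have "\<dots> = (\<Sum>k\<in>B \<inter> {..K-1}. pmf (binomial_pmf (K - 1) (1/2)) k)"
      by (rule measure_measure_pmf_finite) simp
    also have "\<dots> = (\<Sum>k\<in>B \<inter> {..K-1}. real ((K - 1) choose k) * (1/2)^(K-1))"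
    proof (rule sum.cong)
      fix k assume "k \<in> B \<inter> {..K-1}"
      then have "k \<le> K - 1" by simp
      then have "(1/2::real)^k * (1 - 1/2)^(K - 1 - k) = (1/2)^(K-1)"
      proof -
        have "k + (K - 1 - k) = K - 1" using \<open>k \<le> K - 1\<close> by simp
        then show ?thesis by (simp add: power_add[symmetric] del: One_nat_def)
      qed
      then show "pmf (binomial_pmf (K - 1) (1/2)) k = real ((K - 1) choose k) * (1/2)^(K-1)"
        by (simp add: mult.assoc)
    qed simp
    finally show ?thesis .
  qed
  have step1: "(\<Sum>l\<in>S. real (M K l) * (c - real K / real l))
      \<le> (\<Sum>l\<in>S. (c - 1) * real ((K - 1) choose (l - 1)))"
  proof (rule sum_mono)
    fix l assume l: "l \<in> S"
    then have l1: "1 \<le> l" "l \<le> K" by (auto simp: S_def)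
    have "real K / real l \<ge> 1" using l1 by simp
    then have a: "c - real K / real l \<le> c - 1" by linarith
    have "real K / c < real l" using l by (simp add: S_def)
    then have "real K < c * real l" using c1 by (simp add: divide_less_eq mult.commute)
    then have b: "0 \<le> c - real K / real l" using l1 by (simp add: field_simps)
    have "real (M K l) \<le> real ((K - 1) choose (l - 1))" using M_le[OF l1] by simp
    then show "real (M K l) * (c - real K / real l) \<le> (c - 1) * real ((K - 1) choose (l - 1))"
      using a b by (metis mult.commute mult_mono of_nat_0_le_iff)
  qed
  have step2: "(\<Sum>l\<in>S. real ((K - 1) choose (l - 1))) \<le> (\<Sum>k\<in>B \<inter> {..K-1}. real ((K - 1) choose k))"
  proof -
    have inj: "inj_on (\<lambda>l. l - 1) S" by (rule inj_onI) (auto simp: S_def)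
    have sub: "(\<lambda>l. l - 1) ` S \<subseteq> B \<inter> {..K-1}"
    proof
      fix k assume "k \<in> (\<lambda>l. l - 1) ` S"
      then obtain l where l: "l \<in> S" "k = l - 1" by auto
      then have l1: "1 \<le> l" "l \<le> K" "real K / c < real l" by (auto simp: S_def)
      then have "\<lceil>real K / c\<rceil> \<le> int l" by (simp add: ceiling_le_iff)
      then show "k \<in> B \<inter> {..K-1}" using l l1 by (auto simp: B_def c_def)
    qed
    have "(\<Sum>l\<in>S. real ((K - 1) choose (l - 1))) = (\<Sum>k\<in>(\<lambda>l. l - 1) ` S. real ((K - 1) choose k))"
      using sum.reindex[OF inj, of "\<lambda>k. real ((K - 1) choose k)"] by (simp only: o_def)
    also have "\<dots> \<le> (\<Sum>k\<in>B \<inter> {..K-1}. real ((K - 1) choose k))"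
      by (rule sum_mono2) (use sub in auto)
    finally show ?thesis .
  qed
  have "R K = 2 powr (- real K) * (\<Sum>l\<in>S. real (M K l) * (c - real K / real l))"
    by (simp add: R_def S_def c_def)
  also have "\<dots> \<le> 2 powr (- real K) * ((c - 1) * (\<Sum>k\<in>B \<inter> {..K-1}. real ((K - 1) choose k)))"
  proof (rule mult_left_mono)
    have "(\<Sum>l\<in>S. real (M K l) * (c - real K / real l)) \<le> (c - 1) * (\<Sum>l\<in>S. real ((K - 1) choose (l - 1)))"
      using step1 by (simp add: sum_distrib_left)
    also have "\<dots> \<le> (c - 1) * (\<Sum>k\<in>B \<inter> {..K-1}. real ((K - 1) choose k))"
      using step2 c1 by (simp add: mult_left_mono)
    finally show "(\<Sum>l\<in>S. real (M K l) * (c - real K / real l)) \<le> (c - 1) * (\<Sum>k\<in>B \<inter> {..K-1}. real ((K - 1) choose k))" .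
  qed simp
  also have "\<dots> \<le> (c - 1) * ((\<Sum>k\<in>B \<inter> {..K-1}. real ((K - 1) choose k)) * (1/2)^(K-1))"
  proof -
    have e: "2 powr (- real K) = (1/2::real)^K"
    proof -
      have "2 powr (- real K) = inverse (2 ^ K)" by (simp add: powr_minus powr_realpow)
      also have "\<dots> = (1/2::real)^K" by (simp only: inverse_eq_divide power_one_over)
      finally show ?thesis .
    qed
    have "(1/2::real)^K \<le> (1/2)^(K-1)" by (rule power_decreasing) auto
    moreover have "0 \<le> (c - 1) * (\<Sum>k\<in>B \<inter> {..K-1}. real ((K - 1) choose k))"
      using c1 by (simp add: sum_nonneg)
    ultimately have "(1/2::real)^K * ((c - 1) * (\<Sum>k\<in>B \<inter> {..K-1}. real ((K - 1) choose k)))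
       \<le> (1/2)^(K-1) * ((c - 1) * (\<Sum>k\<in>B \<inter> {..K-1}. real ((K - 1) choose k)))"
      by (rule mult_right_mono)
    then show ?thesis unfolding e by (simp only: ac_simps)
  qed
  also have "\<dots> = (c - 1) * measure_pmf.prob (binomial_pmf (K - 1) (1/2)) B"
    unfolding prob by (simp only: sum_distrib_right)
  finally show ?thesis by (simp add: B_def c_def)
qed

end
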